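(* Let $G(x)=\sum_{T\in\mathcal T} w(T)$ be the generating function of Smirnov trees, a formal power series in $x_1,x_2,\dots$ with coefficients in $\mathbb Z[\bar\rho,\rho,\bar\lambda,\lambda]$. Then $$G(x)=\sum_{n\ge1}\sum_{w\in\mathcal W_n} s^{\operatorname{asc} w}\,t^{\operatorname{des} w}\,x_w,$$ where $s=\bar\rho\,\bar\lambda\,G(x)+\bar\rho+\bar\lambda$ and $t=\rho\,\lambda\,G(x)+\rho+\lambda$.
   Context: A word $w=w_1\cdots w_n$ over $\mathbb N=\{1,2,\dots\}$ is a Smirnov word of length $n$ if $w_i\ne w_{i+1}$ for $i=1,\dots,n-1$; $\mathcal W_n$ is the set of Smirnov words of length $n$, $x_w=x_{w_1}\cdots x_{w_n}$, $\operatorname{asc} w=|\{i: w_i<w_{i+1}\}|$, $\operatorname{des} w=|\{i:w_i>w_{i+1}\}|$. Trees are labeled rooted binary trees (each child is a left or a right child, at most one of each) with labels in $\mathbb N$ and at least one node. A Smirnov tree is such a tree where: whenever a left child has the same label $i$ as its parent, the parent also has a right child with label $<i$; and whenever a right child has the same label $i$ as its parent, the parent also has a left child with label $>i$. $\mathcal T$ is the set of Smirnov trees. Weights: $\rho,\bar\rho,\lambda,\bar\lambda$ are commuting indeterminates. An edge from a parent with label $a$ to its right child with label $b$ has weight $\bar\rho$ if $a\le b$ and $\rho$ if $a>b$. An edge between a left child with label $a$ and its parent with label $b$ has weight $\bar\lambda$ if $a\le b$ and $\lambda$ if $a>b$. A node with label $a$ has weight $x_a$. The weight $w(T)$ is the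 product of the weights of all edges and nodes of $T$. *)

theory Defs
  imports "HOL-Library.Multiset" "HOL-Computational_Algebra.Polynomial"
begin

text \<open>A monomial x_{i_1} ... x_{i_k} is represented by the multiset of its indices;
  a formal power series is its coefficient function.\<close>

type_synonym 'a mps = "nat multiset \<Rightarrow> 'a"

definition mps_const :: "'a::comm_ring_1 \<Rightarrow> 'a mps" where
  "mps_const c = (\<lambda>M. if M = {#} then c else 0)"

definition mps_monom :: "nat multiset \<Rightarrow> 'a::comm_ring_1 mps" where
  "mps_monom A = (\<lambda>M. if M = A then 1 else 0)"

definition mps_add :: "'a::comm_ring_1 mps \<Rightarrow> 'a mps \<Rightarrow> 'a mps" where
  "mps_add f g = (\<lambda>M. f M + g M)"

definition mps_smult :: "'a::comm_ring_1 \<Rightarrow> 'a mps \<Rightarrow> 'a mps" where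
  "mps_smult c f = (\<lambda>M. c * f M)"

definition mps_mult :: "'a::comm_ring_1 mps \<Rightarrow> 'a mps \<Rightarrow> 'a mps" where
  "mps_mult f g = (\<lambda>M. \<Sum>A\<in>{A. A \<subseteq># M}. f A * g (M - A))"

primrec mps_pow :: "'a::comm_ring_1 mps \<Rightarrow> nat \<Rightarrow> 'a mps" where
  "mps_pow f 0 = mps_const 1"
| "mps_pow f (Suc n) = mps_mult f (mps_pow f n)"

definition mps_summable :: "'i set \<Rightarrow> ('i \<Rightarrow> 'a::comm_ring_1 mps) \<Rightarrow> bool" where
  "mps_summable I F = (\<forall>M. finite {i \<in> I. F i M \<noteq> 0})"

definition mps_sum :: "'i set \<Rightarrow> ('i \<Rightarrow> 'a::comm_ring_1 mps) \<Rightarrow> 'a mps" where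
  "mps_sum I F = (\<lambda>M. \<Sum>i\<in>{i \<in> I. F i M \<noteq> 0}. F i M)"

text \<open>Leaf means "no node"; a tree (with at least one node) is a Node.
  In Node L a R, L is the left subtree (Leaf = no left child), a is the root label.\<close>

datatype tree = Leaf | Node tree nat tree

fun root_label :: "tree \<Rightarrow> nat option" where
  "root_label Leaf = None"
| "root_label (Node L a R) = Some a"

fun smirnov_tree :: "tree \<Rightarrow> bool" where
  "smirnov_tree Leaf = True"
| "smirnov_tree (Node L a R) =
     (smirnov_tree L \<and> smirnov_tree R \<and>
      (root_label L = Some a \<longrightarrow> (\<exists>b. root_label R = Some b \<and> b < a)) \<and>
      (root_label R = Some a \<longrightarrow> (\<exists>b. root_label L = Some b \<and> b > a)))"

fun tree_labels :: "tree \<Rightarrow> nat multiset" where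
  "tree_labels Leaf = {#}"
| "tree_labels (Node L a R) = tree_labels L + {#a#} + tree_labels R"

text \<open>Product of the edge weights (rb = rho-bar, r = rho, lb = lambda-bar, l = lambda).\<close>

fun tree_edge_weight :: "'a::comm_ring_1 \<Rightarrow> 'a \<Rightarrow> 'a \<Rightarrow> 'a \<Rightarrow> tree \<Rightarrow> 'a" where
  "tree_edge_weight rb r lb l Leaf = 1"
| "tree_edge_weight rb r lb l (Node L a R) =
     (case L of Leaf \<Rightarrow> 1 | Node _ c _ \<Rightarrow> (if c \<le> a then lb else l)) *
     (case R of Leaf \<Rightarrow> 1 | Node _ b _ \<Rightarrow> (if a \<le> b then rb else r)) *
     tree_edge_weight rb r lb l L * tree_edge_weight rb r lb l R"

definition tree_weight :: "'a::comm_ring_1 \<Rightarrow> 'a \<Rightarrow> 'a \<Rightarrow> 'a \<Rightarrow> tree \<Rightarrow> 'a mps" where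
  "tree_weight rb r lb l T =
     (\<lambda>M. if M = tree_labels T then tree_edge_weight rb r lb l T else 0)"

definition smirnov_trees :: "tree set" where
  "smirnov_trees = {T. T \<noteq> Leaf \<and> smirnov_tree T \<and> 0 \<notin># tree_labels T}"

definition smirnov_word :: "nat list \<Rightarrow> bool" where
  "smirnov_word w = (0 \<notin> set w \<and> (\<forall>i. Suc i < length w \<longrightarrow> w ! i \<noteq> w ! Suc i))"

definition asc :: "nat list \<Rightarrow> nat" where
  "asc w = card {i. Suc i < length w \<and> w ! i < w ! Suc i}"

definition des :: "nat list \<Rightarrow> nat" where
  "des w = card {i. Suc i < length w \<and> w ! i > w ! Suc i}"

definition smirnov_words :: "nat list set" where
  "smirnov_words = {w. w \<noteq> [] \<and> smirnov_word w}"

type_synonym coeff = "int poly poly poly poly"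

definition rhobar :: coeff where "rhobar = monom 1 1"
definition rho :: coeff where "rho = [:monom 1 1:]"
definition lambdabar :: coeff where "lambdabar = [:[:monom 1 1:]:]"
definition lambda :: coeff where "lambda = [:[:[:monom 1 1:]:]:]"

end

theory Submission
  imports Defs
begin

lemma finite_submsets: "finite {A. A \<subseteq># (M::'b multiset)}"
proof -
  have "{A. A \<subseteq># M} \<subseteq> mset ` {xs. set xs \<subseteq> set_mset M \<and> length xs \<le> size M}"
  proof
    fix A assume "A \<in> {A. A \<subseteq># M}"
    then have A: "A \<subseteq># M" by simp
    obtain xs where xs: "mset xs = A" using ex_mset by blast
    have "set xs \<subseteq> set_mset M" using A xs by (metis mset_subset_eqD set_mset_mset subsetI)
    moreover have "length xs \<le> size M" using A xs by (metis size_mset size_mset_mono)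
    ultimately show "A \<in> mset ` {xs. set xs \<subseteq> set_mset M \<and> length xs \<le> size M}"
      using xs by blast
  qed
  moreover have "finite {xs. set xs \<subseteq> set_mset M \<and> length xs \<le> size M}"
    by (rule finite_lists_length_le) simp
  ultimately show ?thesis by (meson finite_imageI finite_subset)
qed

lemma msub_diff_mono: "C \<subseteq># M \<Longrightarrow> C - A \<subseteq># M - (A::'b multiset)"
  by (simp add: subseteq_mset_def diff_le_mono)

typedef (overloaded) 'a ms = "UNIV :: (nat multiset \<Rightarrow> 'a::comm_ring_1) set" by simp

abbreviation cf :: "'a::comm_ring_1 ms \<Rightarrow> nat multiset \<Rightarrow> 'a" where "cf \<equiv> Rep_ms"

lemma cf_Abs[simp]: "cf (Abs_ms f) = f"
  by (simp add: Abs_ms_inverse)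

lemma ms_eqI: "(\<And>M. cf f M = cf g M) \<Longrightarrow> f = g"
  by (metis Rep_ms_inject ext)

lemma mult_comm_aux:
  "(\<Sum>A\<in>{A. A \<subseteq># M}. (f A::'a::comm_ring_1) * g (M - A)) = (\<Sum>A\<in>{A. A \<subseteq># M}. g A * f (M - A))"
proof (rule sum.reindex_bij_witness[of _ "\<lambda>A. M - A" "\<lambda>A. M - A"])
qed (auto simp: subset_mset.diff_diff_right mult.commute)

lemma mult_assoc_aux:
  "(\<Sum>A\<in>{A. A \<subseteq># M}. (f A::'a::comm_ring_1) * (\<Sum>B\<in>{B. B \<subseteq># M - A}. g B * h (M - A - B)))
   = (\<Sum>C\<in>{C. C \<subseteq># M}. (\<Sum>A\<in>{A. A \<subseteq># C}. f A * g (C - A)) * h (M - C))"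
proof -
  have "(\<Sum>A\<in>{A. A \<subseteq># M}. f A * (\<Sum>B\<in>{B. B \<subseteq># M - A}. g B * h (M - A - B)))
     = (\<Sum>A\<in>{A. A \<subseteq># M}. \<Sum>B\<in>{B. B \<subseteq># M - A}. f A * g B * h (M - A - B))"
    by (simp add: sum_distrib_left mult.assoc)
  also have "\<dots> = (\<Sum>(A,B)\<in>Sigma {A. A \<subseteq># M} (\<lambda>A. {B. B \<subseteq># M - A}). f A * g B * h (M - A - B))"
    by (subst sum.Sigma) (auto simp: finite_submsets)
  also have "\<dots> = (\<Sum>(C,A)\<in>Sigma {C. C \<subseteq># M} (\<lambda>C. {A. A \<subseteq># C}). f A * g (C - A) * h (M - C))"
  proof (rule sum.reindex_bij_witness[of _ "\<lambda>(C,A). (A, C - A)" "\<lambda>(A,B). (A + B, A)"])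
    fix p assume "p \<in> Sigma {A. A \<subseteq># M} (\<lambda>A. {B. B \<subseteq># M - A})"
    then obtain A B where p: "p = (A,B)" "A \<subseteq># M" "B \<subseteq># M - A" by auto
    then show "(case (case p of (A, B) \<Rightarrow> (A + B, A)) of (C, A) \<Rightarrow> (A, C - A)) = p"
      by simp
    show "(case p of (A, B) \<Rightarrow> (A + B, A)) \<in> Sigma {C. C \<subseteq># M} (\<lambda>C. {A. A \<subseteq># C})"
      using p by (auto simp: subset_mset.le_diff_conv2 add.commute)
    show "(case (case p of (A, B) \<Rightarrow> (A + B, A)) of (C, A) \<Rightarrow> f A * g (C - A) * h (M - C)) =
         (case p of (A, B) \<Rightarrow> f A * g B * h (M - A - B))"
      using p by (simp add: diff_diff_add_mset)
  next
    fix p assume "p \<in> Sigma {C. C \<subseteq># M} (\<lambda>C. {A. A \<subseteq># C})"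
    then obtain C A where p: "p = (C,A)" "C \<subseteq># M" "A \<subseteq># C" by auto
    then show "(case (case p of (C, A) \<Rightarrow> (A, C - A)) of (A, B) \<Rightarrow> (A + B, A)) = p"
      by (simp add: subset_mset.add_diff_inverse)
    show "(case p of (C, A) \<Rightarrow> (A, C - A)) \<in> Sigma {A. A \<subseteq># M} (\<lambda>A. {B. B \<subseteq># M - A})"
      using p by (auto intro: subset_mset.order_trans msub_diff_mono)
  qed
  also have "\<dots> = (\<Sum>C\<in>{C. C \<subseteq># M}. \<Sum>A\<in>{A. A \<subseteq># C}. f A * g (C - A) * h (M - C))"
    by (subst sum.Sigma) (auto simp: finite_submsets)
  also have "\<dots> = (\<Sum>C\<in>{C. C \<subseteq># M}. (\<Sum>A\<in>{A. A \<subseteq># C}. f A * g (C - A)) * h (M - C))"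
    by (simp add: sum_distrib_right)
  finally show ?thesis .
qed

instantiation ms :: (comm_ring_1) comm_ring_1
begin
definition "zero_ms = Abs_ms (\<lambda>M. 0)"
definition "one_ms = Abs_ms (mps_const 1)"
definition "plus_ms f g = Abs_ms (\<lambda>M. cf f M + cf g M)"
definition "minus_ms f g = Abs_ms (\<lambda>M. cf f M - cf g M)"
definition "uminus_ms f = Abs_ms (\<lambda>M. - cf f M)"
definition "times_ms f g = Abs_ms (mps_mult (cf f) (cf g))"

lemma cf_zero[simp]: "cf 0 M = 0" by (simp add: zero_ms_def)
lemma cf_one: "cf 1 M = (if M = {#} then 1 else 0)" by (simp add: one_ms_def mps_const_def)
lemma cf_plus[simp]: "cf (f + g) M = cf f M + cf g M" by (simp add: plus_ms_def)
lemma cf_minus[simp]: "cf (f - g) M = cf f M - cf g M" by (simp add: minus_ms_def)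
lemma cf_uminus[simp]: "cf (- f) M = - cf f M" by (simp add: uminus_ms_def)
lemma cf_times: "cf (f * g) M = (\<Sum>A\<in>{A. A \<subseteq># M}. cf f A * cf g (M - A))"
  by (simp add: times_ms_def mps_mult_def)

instance
proof
  fix a b c :: "'a ms"
  show "a * b * c = a * (b * c)"
  proof (rule ms_eqI)
    fix M
    have "cf (a * (b * c)) M = (\<Sum>A\<in>{A. A \<subseteq># M}. cf a A * (\<Sum>B\<in>{B. B \<subseteq># M - A}. cf b B * cf c (M - A - B)))"
      by (simp only: cf_times)
    also have "\<dots> = (\<Sum>C\<in>{C. C \<subseteq># M}. (\<Sum>A\<in>{A. A \<subseteq># C}. cf a A * cf b (C - A)) * cf c (M - C))"
      by (rule mult_assoc_aux)
    also have "\<dots> = cf (a * b * c) M" by (simp only: cf_times)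
    finally show "cf (a * b * c) M = cf (a * (b * c)) M" by simp
  qed
  show "a * b = b * a"
    by (rule ms_eqI) (simp add: cf_times mult_comm_aux)
  show "1 * a = a"
  proof (rule ms_eqI)
    fix M
    have "cf (1 * a) M = (\<Sum>A\<in>{A. A \<subseteq># M}. (if A = {#} then cf a (M - A) else 0))"
      unfolding cf_times cf_one by (rule sum.cong) auto
    also have "\<dots> = cf a M" by (simp add: sum.delta finite_submsets)
    finally show "cf (1 * a) M = cf a M" .
  qed
  show "(a + b) * c = a * c + b * c"
    by (rule ms_eqI) (simp add: cf_times sum.distrib distrib_right)
  show "a + b + c = a + (b + c)" by (rule ms_eqI) (simp add: add.assoc)
  show "a + b = b + a" by (rule ms_eqI) (simp add: add.commute)
  show "0 + a = a" by (rule ms_eqI) simp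
  show "- a + a = 0" by (rule ms_eqI) simp
  show "a - b = a + - b" by (rule ms_eqI) simp
  show "(0::'a ms) \<noteq> 1"
  proof
    assume "(0::'a ms) = 1"
    then have "cf (0::'a ms) {#} = cf 1 {#}" by simp
    then show False by (simp add: cf_one)
  qed
qed
end

definition cst :: "'a::comm_ring_1 \<Rightarrow> 'a ms" where "cst c = Abs_ms (mps_const c)"
definition Mon :: "nat multiset \<Rightarrow> 'a::comm_ring_1 ms" where "Mon A = Abs_ms (mps_monom A)"

lemma cf_cst: "cf (cst c) M = (if M = {#} then c else 0)"
  by (simp add: cst_def mps_const_def)

lemma cf_Mon: "cf (Mon A) M = (if M = A then 1 else 0)"
  by (simp add: Mon_def mps_monom_def)

lemma cf_times_empty: "cf (f * g) {#} = cf f {#} * cf g {#}"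
  by (simp add: cf_times)

lemma cf_cst_times: "cf (cst c * f) M = c * cf f M"
proof -
  have "cf (cst c * f) M = (\<Sum>A\<in>{A. A \<subseteq># M}. if A = {#} then c * cf f (M - A) else 0)"
    unfolding cf_times cf_cst by (rule sum.cong) auto
  also have "\<dots> = c * cf f M" by (simp add: sum.delta finite_submsets)
  finally show ?thesis .
qed

lemma cf_Mon_times: "cf (Mon B * f) M = (if B \<subseteq># M then cf f (M - B) else 0)"
proof -
  have "cf (Mon B * f) M = (\<Sum>A\<in>{A. A \<subseteq># M}. if A = B then cf f (M - A) else 0)"
    unfolding cf_times cf_Mon by (rule sum.cong) auto
  also have "\<dots> = (if B \<subseteq># M then cf f (M - B) else 0)" by (simp add: sum.delta finite_submsets)
  finally show ?thesis .
qed

lemma cst_add: "cst (a + b) = cst a + cst b"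
  by (rule ms_eqI) (simp add: cf_cst)
lemma cst_mult: "cst (a * b) = cst a * cst b"
  by (rule ms_eqI) (simp add: cf_cst_times cf_cst)
lemma cst_one: "cst 1 = 1"
  by (rule ms_eqI) (simp add: cf_cst cf_one)

lemma Mon_empty: "Mon {#} = 1"
  by (rule ms_eqI) (simp add: cf_Mon cf_one)

lemma Mon_add: "Mon (A + B) = Mon A * Mon B"
proof (rule ms_eqI)
  fix M
  show "cf (Mon (A + B)) M = cf (Mon A * Mon B) M"
    by (auto simp add: cf_Mon_times cf_Mon subset_mset.add_diff_inverse)
qed

lemma cf_sum: "cf (\<Sum>i\<in>I. f i) M = (\<Sum>i\<in>I. cf (f i) M)"
  by (induction I rule: infinite_finite_induct) auto

lemma cf_prod_empty: "cf (\<Prod>i\<in>I. f i) {#} = (\<Prod>i\<in>I. cf (f i) {#})"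
  by (induction I rule: infinite_finite_induct) (auto simp: cf_one cf_times_empty)

lemma cancel_lemma:
  fixes f g :: "'a::idom ms"
  assumes f0: "cf f {#} \<noteq> 0" and fg: "f * g = 0"
  shows "g = 0"
proof (rule ccontr)
  assume "g \<noteq> 0"
  then obtain M where "cf g M \<noteq> 0" by (metis cf_zero ms_eqI)
  then have ex: "\<exists>n M. size M = n \<and> cf g M \<noteq> 0" by blast
  define n where "n = (LEAST n. \<exists>M. size M = n \<and> cf g M \<noteq> 0)"
  obtain M where M: "size M = n" "cf g M \<noteq> 0"
    using LeastI_ex[OF ex] n_def by blast
  have small: "cf g N = 0" if "size N < n" for N
    using not_less_Least[of "size N" "\<lambda>n. \<exists>M. size M = n \<and> cf g M \<noteq> 0"] that n_def by blast
  have "cf (f * g) M = (\<Sum>A\<in>{A. A \<subseteq># M}. if A = {#} then cf f A * cf g (M - A) else 0)"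
  proof (unfold cf_times, rule sum.cong)
    fix A assume "A \<in> {A. A \<subseteq># M}"
    then have A: "A \<subseteq># M" by simp
    show "cf f A * cf g (M - A) = (if A = {#} then cf f A * cf g (M - A) else 0)"
    proof (cases "A = {#}")
      case False
      then have "size (M - A) < n" using A M(1)
        by (metis nonempty_has_size size_Diff_submset diff_less le_neq_implies_less size_mset_mono zero_less_iff_neq_zero size_empty not_less_zero)
      then show ?thesis using small False by simp
    qed simp
  qed simp
  also have "\<dots> = cf f {#} * cf g M" by (simp add: sum.delta finite_submsets)
  finally have "cf (f * g) M \<noteq> 0" using f0 M(2) by simp
  then show False using fg by simp
qed

definition agree :: "nat multiset \<Rightarrow> 'a::comm_ring_1 ms \<Rightarrow> 'a ms \<Rightarrow> bool" where
  "agree M f g = (\<forall>N. N \<subseteq># M \<longrightarrow> cf f N = cf g N)"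

lemma agree_times: "agree M f f' \<Longrightarrow> agree M g g' \<Longrightarrow> agree M (f * g) (f' * g')"
  unfolding agree_def cf_times
  by (auto intro!: sum.cong intro: subset_mset.order_trans)
     (metis diff_subset_eq_self subset_mset.order_trans)

lemma agree_refl: "agree M f f" by (simp add: agree_def)

lemma agree_power: "agree M f f' \<Longrightarrow> agree M (f ^ n) (f' ^ n)"
  by (induction n) (auto simp: agree_refl agree_times)

lemma local_sum:
  assumes "finite I" and "\<And>N. N \<subseteq># M \<Longrightarrow> cf Z N = (\<Sum>i\<in>I. cf (f i) N)"
  shows "cf (Y * Z) M = (\<Sum>i\<in>I. cf (Y * f i) M)"
proof -
  have "cf (Y * Z) M = (\<Sum>A\<in>{A. A \<subseteq># M}. cf Y A * (\<Sum>i\<in>I. cf (f i) (M - A)))"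
    unfolding cf_times by (rule sum.cong) (auto simp: assms(2) diff_subset_eq_self)
  also have "\<dots> = (\<Sum>i\<in>I. cf (Y * f i) M)"
    unfolding cf_times sum_distrib_left by (rule sum.swap)
  finally show ?thesis .
qed

lemma local_tree_identity:
  fixes l g h X RB R LB L :: "'a::comm_ring_1"
  assumes rec: "g = X * ((1 + LB*l + L*h) * (1 + RB*h + R*l) + g * (LB*R*l + L*RB*h))"
  defines "S \<equiv> RB + LB + RB*LB*(l+g+h)" and "T \<equiv> R + L + R*L*(l+g+h)"
  shows "(1 + LB*(l+g) + L*h) * (1 + R*l + RB*(g+h)) * (1 + T*X)
       = (1 + LB*l + L*(g+h)) * (1 + R*(l+g) + RB*h) * (1 + S*X)"
proof -
  define Q where "Q = (1 + LB*l + L*h) * (1 + RB*h + R*l) + g * (LB*R*l + L*RB*h)"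
  have gQ: "g = X * Q" using rec Q_def by simp
  have 1: "(1 + LB*(l+g) + L*h) * (1 + R*l + RB*(g+h)) = Q + S * g"
    unfolding Q_def S_def by (simp add: algebra_simps)
  have 2: "(1 + LB*l + L*(g+h)) * (1 + R*(l+g) + RB*h) = Q + T * g"
    unfolding Q_def T_def by (simp add: algebra_simps)
  show ?thesis unfolding 1 2 unfolding gQ by (simp add: algebra_simps)
qed

lemma local_word_identity:
  fixes Fl Fa Fh X S T :: "'a::comm_ring_1"
  assumes rec: "Fa = X * (1 + S * Fh + T * Fl)"
  shows "(1 + T*(Fl+Fa+Fh) + (S - T)*(Fa + Fh)) * (1 + T*X)
       = (1 + T*(Fl+Fa+Fh) + (S - T)*Fh) * (1 + S*X)"
  unfolding rec by (simp add: algebra_simps)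

lemma split3: 
  fixes f :: "nat \<Rightarrow> 'a::comm_monoid_add"
  assumes "1 \<le> a" "a \<le> m"
  shows "(\<Sum>b\<in>{1..m}. f b) = (\<Sum>b\<in>{1..<a}. f b) + f a + (\<Sum>b\<in>{a<..m}. f b)"
proof -
  have e: "{1..m} = {1..<a} \<union> insert a {a<..m}" using assms by auto
  have "(\<Sum>b\<in>{1..m}. f b) = (\<Sum>b\<in>{1..<a}. f b) + (\<Sum>b\<in>insert a {a<..m}. f b)"
    unfolding e by (rule sum.union_disjoint) auto
  also have "(\<Sum>b\<in>insert a {a<..m}. f b) = f a + (\<Sum>b\<in>{a<..m}. f b)" by simp
  finally show ?thesis by (simp add: add.assoc)
qed

lemma split_lo:
  fixes f :: "nat \<Rightarrow> 'a::comm_monoid_add"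
  assumes "1 \<le> a"
  shows "(\<Sum>b\<in>{1..a}. f b) = (\<Sum>b\<in>{1..<a}. f b) + f a"
proof -
  have "{1..a} = insert a {1..<a}" using assms by auto
  then show ?thesis by (simp add: add.commute)
qed

lemma split_lo': "(\<Sum>b\<in>{1..a - 1}. f b) = (\<Sum>b\<in>{1..<a::nat}. (f b :: 'a::comm_monoid_add))"
proof -
  have "{1..a - 1} = {1..<a}" by (cases a) auto
  then show ?thesis by simp
qed

lemma split_hi:
  fixes f :: "nat \<Rightarrow> 'a::comm_monoid_add"
  assumes "1 \<le> a" "a \<le> m"
  shows "(\<Sum>b\<in>{a - 1<..m}. f b) = f a + (\<Sum>b\<in>{a<..m}. f b)"
proof -
  have "{a - 1<..m} = insert a {a<..m}" using assms by auto
  then show ?thesis by simp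
qed

lemma cf_empty_lin: 
  assumes "\<And>b. cf (Gr b) {#} = 0"
  shows "cf (1 + C * (\<Sum>b\<in>I. Gr b) + D * (\<Sum>b\<in>J. Gr b)) {#} = 1"
  by (simp add: cf_times_empty cf_sum assms cf_one)

lemma tree_telescope:
  fixes Gr X :: "nat \<Rightarrow> 'a::idom ms" and RB R LB L :: "'a ms"
  assumes rec: "\<And>a. a \<in> {1..m} \<Longrightarrow> Gr a = X a * ((1 + LB*(\<Sum>b\<in>{1..<a}. Gr b) + L*(\<Sum>b\<in>{a<..m}. Gr b))
       * (1 + RB*(\<Sum>b\<in>{a<..m}. Gr b) + R*(\<Sum>b\<in>{1..<a}. Gr b))
       + Gr a * (LB*R*(\<Sum>b\<in>{1..<a}. Gr b) + L*RB*(\<Sum>b\<in>{a<..m}. Gr b)))"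
    and z: "\<And>b. cf (Gr b) {#} = 0"
  defines "Gt \<equiv> \<Sum>b\<in>{1..m}. Gr b"
  defines "S \<equiv> RB + LB + RB*LB*Gt" and "T \<equiv> R + L + R*L*Gt"
  shows "(1 + S*Gt) * (\<Prod>a\<in>{1..m}. 1 + T * X a) = (1 + T*Gt) * (\<Prod>a\<in>{1..m}. 1 + S * X a)"
proof -
  define Ut where "Ut k = 1 + LB*(\<Sum>b\<in>{1..k}. Gr b) + L*(\<Sum>b\<in>{k<..m}. Gr b)" for k
  define Vt where "Vt k = 1 + R*(\<Sum>b\<in>{1..k}. Gr b) + RB*(\<Sum>b\<in>{k<..m}. Gr b)" for k
  define PT where "PT k = (\<Prod>a\<in>{1..k}. 1 + T * X a)" for k
  define PS where "PS k = (\<Prod>a\<in>{1..k}. 1 + S * X a)" for k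
  have loc: "Ut a * Vt (a - 1) * (1 + T * X a) = Ut (a - 1) * Vt a * (1 + S * X a)" if a: "a \<in> {1..m}" for a
  proof -
    define l where "l = (\<Sum>b\<in>{1..<a}. Gr b)"
    define h where "h = (\<Sum>b\<in>{a<..m}. Gr b)"
    have Gt: "Gt = l + Gr a + h" unfolding Gt_def l_def h_def using a split3 by auto
    have e1: "(\<Sum>b\<in>{1..a}. Gr b) = l + Gr a" unfolding l_def using a by (intro split_lo) simp
    have e2: "(\<Sum>b\<in>{1..a - 1}. Gr b) = l" unfolding l_def by (rule split_lo')
    have e3: "(\<Sum>b\<in>{a - 1<..m}. Gr b) = Gr a + h" unfolding h_def using a by (intro split_hi) simp_all
    have "Ut a = 1 + LB*(l + Gr a) + L*h" unfolding Ut_def e1 h_def ..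
    moreover have "Vt (a - 1) = 1 + R*l + RB*(Gr a + h)" unfolding Vt_def e2 e3 ..
    moreover have "Ut (a - 1) = 1 + LB*l + L*(Gr a + h)" unfolding Ut_def e2 e3 ..
    moreover have "Vt a = 1 + R*(l + Gr a) + RB*h" unfolding Vt_def e1 h_def ..
    ultimately show ?thesis unfolding S_def T_def Gt
      using local_tree_identity[of "Gr a" "X a" LB l L h RB R] rec[OF a] l_def h_def by simp
  qed
  have cfU: "cf (Ut k) {#} = 1" for k unfolding Ut_def by (rule cf_empty_lin[OF z])
  have cfV: "cf (Vt k) {#} = 1" for k unfolding Vt_def by (rule cf_empty_lin[OF z])
  have claim: "k \<le> m \<Longrightarrow> Ut k * Vt 0 * PT k = Ut 0 * Vt k * PS k" for k
  proof (induction k)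
    case 0
    then show ?case by (simp add: PT_def PS_def mult.commute)
  next
    case (Suc k)
    then have IH: "Ut k * Vt 0 * PT k = Ut 0 * Vt k * PS k" by simp
    have a: "Suc k \<in> {1..m}" using Suc by simp
    have PTs: "PT (Suc k) = PT k * (1 + T * X (Suc k))" unfolding PT_def by (simp add: prod.cl_ivl_Suc)
    have PSs: "PS (Suc k) = PS k * (1 + S * X (Suc k))" unfolding PS_def by (simp add: prod.cl_ivl_Suc)
    have "(Ut k * Vt k) * (Ut (Suc k) * Vt 0 * PT (Suc k))
        = (Ut (Suc k) * Vt k * (1 + T * X (Suc k))) * (Ut k * Vt 0 * PT k)"
      unfolding PTs by (simp add: ac_simps)
    also have "\<dots> = (Ut k * Vt (Suc k) * (1 + S * X (Suc k))) * (Ut 0 * Vt k * PS k)"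
      using loc[OF a] IH by simp
    also have "\<dots> = (Ut k * Vt k) * (Ut 0 * Vt (Suc k) * PS (Suc k))"
      unfolding PSs by (simp add: ac_simps)
    finally have "(Ut k * Vt k) * (Ut (Suc k) * Vt 0 * PT (Suc k) - Ut 0 * Vt (Suc k) * PS (Suc k)) = 0"
      by (simp add: right_diff_distrib)
    moreover have "cf (Ut k * Vt k) {#} \<noteq> 0" by (simp add: cf_times_empty cfU cfV)
    ultimately show ?case using cancel_lemma by fastforce
  qed
  have "Ut m * Vt 0 * PT m = Ut 0 * Vt m * PS m" using claim by simp
  moreover have "Ut m = 1 + LB * Gt" "Vt m = 1 + R * Gt" unfolding Ut_def Vt_def Gt_def by simp_all
  moreover have "{0<..m} = {1..m}" by auto
  then have "Ut 0 = 1 + L * Gt" "Vt 0 = 1 + RB * Gt" unfolding Ut_def Vt_def Gt_def by simp_all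
  ultimately have "(1 + LB * Gt) * (1 + RB * Gt) * PT m = (1 + L * Gt) * (1 + R * Gt) * PS m"
    by (simp add: ac_simps)
  moreover have "1 + S*Gt = (1 + LB * Gt) * (1 + RB * Gt)" "1 + T*Gt = (1 + L * Gt) * (1 + R * Gt)"
    unfolding S_def T_def by (simp_all add: algebra_simps)
  ultimately show ?thesis unfolding PT_def PS_def by simp
qed

lemma word_telescope:
  fixes F X :: "nat \<Rightarrow> 'a::comm_ring_1 ms" and S T :: "'a ms"
  assumes rec: "\<And>a. a \<in> {1..m} \<Longrightarrow> F a = X a * (1 + S*(\<Sum>b\<in>{a<..m}. F b) + T*(\<Sum>b\<in>{1..<a}. F b))"
  defines "Ft \<equiv> \<Sum>b\<in>{1..m}. F b"
  shows "(1 + S*Ft) * (\<Prod>a\<in>{1..m}. 1 + T * X a) = (1 + T*Ft) * (\<Prod>a\<in>{1..m}. 1 + S * X a)"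
proof -
  define c where "c k = 1 + T*Ft + (S - T)*(\<Sum>b\<in>{k<..m}. F b)" for k
  define PT where "PT k = (\<Prod>a\<in>{1..k}. 1 + T * X a)" for k
  define PS where "PS k = (\<Prod>a\<in>{1..k}. 1 + S * X a)" for k
  have loc: "c (a - 1) * (1 + T * X a) = c a * (1 + S * X a)" if a: "a \<in> {1..m}" for a
  proof -
    have Ft: "Ft = (\<Sum>b\<in>{1..<a}. F b) + F a + (\<Sum>b\<in>{a<..m}. F b)" unfolding Ft_def using a split3 by auto
    have e3: "(\<Sum>b\<in>{a - 1<..m}. F b) = F a + (\<Sum>b\<in>{a<..m}. F b)" using a by (intro split_hi) simp_all
    show ?thesis unfolding c_def Ft e3 using local_word_identity[OF rec[OF a]] by simp
  qed
  have claim: "k \<le> m \<Longrightarrow> c 0 * PT k = c k * PS k" for k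
  proof (induction k)
    case 0
    then show ?case by (simp add: PT_def PS_def)
  next
    case (Suc k)
    then have IH: "c 0 * PT k = c k * PS k" by simp
    have a: "Suc k \<in> {1..m}" using Suc by simp
    have "c 0 * PT (Suc k) = c 0 * PT k * (1 + T * X (Suc k))" unfolding PT_def by (simp add: prod.cl_ivl_Suc ac_simps)
    also have "\<dots> = PS k * (c k * (1 + T * X (Suc k)))" using IH by (simp add: ac_simps)
    also have "\<dots> = PS k * (c (Suc k) * (1 + S * X (Suc k)))" using loc[OF a] by simp
    also have "\<dots> = c (Suc k) * PS (Suc k)" unfolding PS_def by (simp add: prod.cl_ivl_Suc ac_simps)
    finally show ?case .
  qed
  have "c 0 * PT m = c m * PS m" using claim by simp
  moreover have "{0<..m} = {1..m}" by auto
  then have "c 0 = 1 + S * Ft" unfolding c_def Ft_def by (simp add: algebra_simps)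
  moreover have "c m = 1 + T * Ft" unfolding c_def by simp
  ultimately show ?thesis unfolding PT_def PS_def by simp
qed

lemma uniqueness:
  fixes G F S T PT PS :: "'a::idom ms"
  assumes "(1 + S*G) * PT = (1 + T*G) * PS" "(1 + S*F) * PT = (1 + T*F) * PS"
    and "cf (S*PT - T*PS) {#} \<noteq> 0"
  shows "G = F"
proof -
  have "(S*PT - T*PS) * (G - F) = ((1 + S*G) * PT - (1 + T*G) * PS) - ((1 + S*F) * PT - (1 + T*F) * PS)"
    by (simp add: algebra_simps)
  also have "\<dots> = 0" using assms(1,2) by simp
  finally have "G - F = 0" using cancel_lemma assms(3) by blast
  then show ?thesis by simp
qed

definition Tr :: "nat multiset \<Rightarrow> tree set" where "Tr N = {T. tree_labels T = N}"

lemma finite_Tr: "finite (Tr N)"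
proof (induction "size N" arbitrary: N rule: less_induct)
  case less
  define SUB where "SUB = (\<Union>A\<in>{A. A \<subseteq># N \<and> size A < size N}. Tr A)"
  have fI: "finite {A. A \<subseteq># N \<and> size A < size N}"
    by (rule finite_subset[OF _ finite_submsets[of N]]) auto
  have fS: "finite SUB" unfolding SUB_def
    by (intro finite_UN_I fI) (auto intro: less)
  have "Tr N \<subseteq> insert Leaf ((\<lambda>(L,a,R). Node L a R) ` (SUB \<times> set_mset N \<times> SUB))"
  proof
    fix T assume T: "T \<in> Tr N"
    show "T \<in> insert Leaf ((\<lambda>(L,a,R). Node L a R) ` (SUB \<times> set_mset N \<times> SUB))"
    proof (cases T)
      case (Node L a R)
      then have N: "N = tree_labels L + {#a#} + tree_labels R" using T by (simp add: Tr_def)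
      have "L \<in> SUB" unfolding SUB_def Tr_def using N by auto
      moreover have "R \<in> SUB" unfolding SUB_def Tr_def using N by auto
      moreover have "a \<in># N" using N by simp
      ultimately have "(L,a,R) \<in> SUB \<times> set_mset N \<times> SUB" by simp
      then show ?thesis unfolding Node by (intro insertI2 image_eqI[where x="(L,a,R)"]) simp_all
    qed simp
  qed
  then show ?case using fS by (meson finite.insertI finite_SigmaI finite_imageI finite_set_mset finite_subset)
qed

lemma Tr_Leaf: "Leaf \<in> Tr A \<longleftrightarrow> A = {#}"
  by (auto simp: Tr_def)

lemma root_in_labels: "root_label T = Some b \<Longrightarrow> b \<in># tree_labels T"
  by (cases T) auto

definition ew :: "tree \<Rightarrow> coeff" where "ew T = tree_edge_weight rhobar rho lambdabar lambda T"

definition alph :: "nat \<Rightarrow> nat multiset \<Rightarrow> bool" where "alph m N = (set_mset N \<subseteq> {1..m})"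

definition Gr :: "nat \<Rightarrow> nat \<Rightarrow> coeff ms" where
  "Gr m b = Abs_ms (\<lambda>N. if alph m N then (\<Sum>T\<in>Tr N. if smirnov_tree T \<and> root_label T = Some b then ew T else 0) else 0)"

lemma cf_Gr: "cf (Gr m b) N = (if alph m N then (\<Sum>T\<in>Tr N. if smirnov_tree T \<and> root_label T = Some b then ew T else 0) else 0)"
  by (simp add: Gr_def)

lemma cf_Gr_empty: "cf (Gr m b) {#} = 0"
  unfolding cf_Gr Tr_def by (fastforce intro!: sum.neutral dest: root_in_labels)

lemma tree_root_decomp:
  assumes "a \<in># N"
  shows "(\<Sum>T\<in>Tr N. if root_label T = Some a then f T else 0)
       = (\<Sum>A\<in>{A. A \<subseteq># N - {#a#}}. \<Sum>L\<in>Tr A. \<Sum>R\<in>Tr (N - {#a#} - A). f (Node L a R))"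
proof -
  define N' where "N' = N - {#a#}"
  have NN: "N = N' + {#a#}" using assms N'_def by simp
  have "(\<Sum>T\<in>Tr N. if root_label T = Some a then f T else 0) = (\<Sum>T\<in>{T\<in>Tr N. root_label T = Some a}. f T)"
    by (simp add: sum.inter_filter finite_Tr)
  also have "\<dots> = (\<Sum>(A,L,R)\<in>Sigma {A. A \<subseteq># N'} (\<lambda>A. Tr A \<times> Tr (N' - A)). f (Node L a R))"
  proof (rule sum.reindex_bij_witness[of _ "\<lambda>(A,L,R). Node L a R" "\<lambda>T. case T of Node L _ R \<Rightarrow> (tree_labels L, L, R)"])
    fix p assume "p \<in> Sigma {A. A \<subseteq># N'} (\<lambda>A. Tr A \<times> Tr (N' - A))"
    then obtain A L R where p: "p = (A,L,R)" "A \<subseteq># N'" "tree_labels L = A" "tree_labels R = N' - A"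
      by (auto simp: Tr_def)
    then show "(case (case p of (A, L, R) \<Rightarrow> Node L a R) of Node L x R \<Rightarrow> (tree_labels L, L, R)) = p" by simp
    show "(case p of (A, L, R) \<Rightarrow> Node L a R) \<in> {T \<in> Tr N. root_label T = Some a}"
    proof -
      have "tree_labels L + {#a#} + tree_labels R = N"
        using p NN by (metis add.commute add_mset_add_single subset_mset.add_diff_inverse union_mset_add_mset_left)
      then show ?thesis using p by (simp add: Tr_def)
    qed
  next
    fix T assume "T \<in> {T \<in> Tr N. root_label T = Some a}"
    then obtain L R where T: "T = Node L a R" "tree_labels L + {#a#} + tree_labels R = N"
      by (cases T) (auto simp: Tr_def)
    then have "tree_labels L + tree_labels R = N'" using NN by simp
    then have "tree_labels L \<subseteq># N'" "N' - tree_labels L = tree_labels R" by auto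
    then show "(case (case T of Node L x R \<Rightarrow> (tree_labels L, L, R)) of (A, L, R) \<Rightarrow> Node L a R) = T"
      "(case T of Node L x R \<Rightarrow> (tree_labels L, L, R)) \<in> Sigma {A. A \<subseteq># N'} (\<lambda>A. Tr A \<times> Tr (N' - A))"
      "(case (case T of Node L x R \<Rightarrow> (tree_labels L, L, R)) of (A, L, R) \<Rightarrow> f (Node L a R)) = f T"
      using T by (simp_all add: Tr_def)
  qed
  also have "\<dots> = (\<Sum>A\<in>{A. A \<subseteq># N'}. \<Sum>L\<in>Tr A. \<Sum>R\<in>Tr (N' - A). f (Node L a R))"
  proof -
    have "(\<Sum>(A,L,R)\<in>Sigma {A. A \<subseteq># N'} (\<lambda>A. Tr A \<times> Tr (N' - A)). f (Node L a R))
       = (\<Sum>A\<in>{A. A \<subseteq># N'}. \<Sum>(L,R)\<in>Tr A \<times> Tr (N' - A). f (Node L a R))"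
      by (rule sum.Sigma[symmetric]) (auto simp: finite_submsets finite_Tr)
    also have "\<dots> = (\<Sum>A\<in>{A. A \<subseteq># N'}. \<Sum>L\<in>Tr A. \<Sum>R\<in>Tr (N' - A). f (Node L a R))"
      by (rule sum.cong[OF refl]) (simp add: sum.cartesian_product)
    finally show ?thesis .
  qed
  finally show ?thesis unfolding N'_def .
qed


definition rs :: "nat \<Rightarrow> 'a::comm_ring_1 ms \<Rightarrow> bool" where
  "rs m f = (\<forall>N. \<not> alph m N \<longrightarrow> cf f N = 0)"

lemma rs_plus: "rs m f \<Longrightarrow> rs m g \<Longrightarrow> rs m (f + g)" by (simp add: rs_def)
lemma rs_times: "rs m f \<Longrightarrow> rs m g \<Longrightarrow> rs m (f * g)"
  unfolding rs_def cf_times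
proof (intro allI impI sum.neutral ballI)
  fix N A assume f: "\<forall>N. \<not> alph m N \<longrightarrow> cf f N = 0" and g: "\<forall>N. \<not> alph m N \<longrightarrow> cf g N = 0"
    and N: "\<not> alph m N" and A: "A \<in> {A. A \<subseteq># N}"
  have "N = A + (N - A)" using A by (simp add: subset_mset.add_diff_inverse)
  then have "set_mset N = set_mset A \<union> set_mset (N - A)" by (metis set_mset_union)
  then have "\<not> alph m A \<or> \<not> alph m (N - A)" using N by (auto simp: alph_def)
  then show "cf f A * cf g (N - A) = 0" using f g by auto
qed
lemma rs_cst: "rs m (cst c)" by (simp add: rs_def cf_cst alph_def)
lemma rs_one: "rs m 1" by (simp add: rs_def cf_one alph_def)
lemma rs_Gr: "rs m (Gr m b)" by (simp add: rs_def cf_Gr)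
lemma rs_sum: "(\<And>i. i \<in> I \<Longrightarrow> rs m (f i)) \<Longrightarrow> rs m (\<Sum>i\<in>I. f i)"
  by (simp add: rs_def cf_sum)

abbreviation "RBc \<equiv> cst rhobar"
abbreviation "Rc \<equiv> cst rho"
abbreviation "LBc \<equiv> cst lambdabar"
abbreviation "Lc \<equiv> cst lambda"

definition lo :: "nat \<Rightarrow> nat \<Rightarrow> coeff ms" where "lo m a = (\<Sum>b\<in>{1..<a}. Gr m b)"
definition hi :: "nat \<Rightarrow> nat \<Rightarrow> coeff ms" where "hi m a = (\<Sum>b\<in>{a<..m}. Gr m b)"

lemma sum_roots:
  assumes "alph m A" "finite B"
  shows "(\<Sum>b\<in>B. cf (Gr m b) A) = (\<Sum>T\<in>Tr A. if smirnov_tree T \<and> (\<exists>b\<in>B. root_label T = Some b) then ew T else 0)"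
proof -
  have "(\<Sum>b\<in>B. cf (Gr m b) A) = (\<Sum>T\<in>Tr A. \<Sum>b\<in>B. if smirnov_tree T \<and> root_label T = Some b then ew T else 0)"
    using assms by (simp add: cf_Gr sum.swap[of _ B])
  also have "\<dots> = (\<Sum>T\<in>Tr A. if smirnov_tree T \<and> (\<exists>b\<in>B. root_label T = Some b) then ew T else 0)"
  proof (rule sum.cong[OF refl])
    fix T
    show "(\<Sum>b\<in>B. if smirnov_tree T \<and> root_label T = Some b then ew T else 0) =
          (if smirnov_tree T \<and> (\<exists>b\<in>B. root_label T = Some b) then ew T else 0)"
    proof (cases "root_label T")
      case (Some c)
      have "(\<Sum>b\<in>B. if smirnov_tree T \<and> root_label T = Some b then ew T else 0)
          = (\<Sum>b\<in>B. if c = b then (if smirnov_tree T then ew T else 0) else 0)"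
        using Some by (intro sum.cong) auto
      also have "\<dots> = (if c \<in> B then (if smirnov_tree T then ew T else 0) else 0)"
        using assms(2) by (simp add: sum.delta)
      finally show ?thesis using Some by auto
    qed simp
  qed
  finally show ?thesis .
qed

context
  fixes m a :: nat
begin

definition "eL L = (case L of Leaf \<Rightarrow> 1 | Node _ c _ \<Rightarrow> (if c \<le> a then lambdabar else lambda))"
definition "eR R = (case R of Leaf \<Rightarrow> 1 | Node _ b _ \<Rightarrow> (if a \<le> b then rhobar else rho))"
definition "p0 L = (if smirnov_tree L \<and> root_label L \<noteq> Some a then eL L * ew L else 0)"
definition "q0 R = (if smirnov_tree R \<and> root_label R \<noteq> Some a then eR R * ew R else 0)"
definition "pe L = (if smirnov_tree L \<and> root_label L = Some a then ew L else 0)"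
definition "plt L = (if smirnov_tree L \<and> (\<exists>b\<in>{1..<a}. root_label L = Some b) then ew L else 0)"
definition "pgt L = (if smirnov_tree L \<and> (\<exists>b\<in>{a<..m}. root_label L = Some b) then ew L else 0)"

lemma pointwise:
  assumes "\<And>c. root_label L = Some c \<Longrightarrow> c \<in> {1..m}" "\<And>c. root_label R = Some c \<Longrightarrow> c \<in> {1..m}"
  shows "(if smirnov_tree (Node L a R) then ew (Node L a R) else 0)
       = p0 L * q0 R + (lambdabar * rho) * (pe L * plt R) + (lambda * rhobar) * (pgt L * pe R)"
proof -
  have key: "ew (Node L a R) = eL L * eR R * ew L * ew R" by (simp add: ew_def eL_def eR_def)
  have eLr: "eL L = (case root_label L of None \<Rightarrow> 1 | Some c \<Rightarrow> (if c \<le> a then lambdabar else lambda))"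
    by (cases L) (auto simp: eL_def)
  have eRr: "eR R = (case root_label R of None \<Rightarrow> 1 | Some b \<Rightarrow> (if a \<le> b then rhobar else rho))"
    by (cases R) (auto simp: eR_def)
  have Ln: "root_label L = None \<Longrightarrow> L = Leaf" by (cases L) auto
  have Rn: "root_label R = None \<Longrightarrow> R = Leaf" by (cases R) auto
  note defs = p0_def q0_def pe_def plt_def pgt_def
  show ?thesis
  proof (cases "root_label L")
    case None
    then have L: "L = Leaf" using Ln by simp
    show ?thesis
    proof (cases "root_label R")
      case (Some b)
      have "b \<in> {1..m}" using assms(2) Some by simp
      then show ?thesis using L Some key eRr
        by (cases "b = a") (simp_all add: eL_def defs ew_def)
    qed (use L Rn key in \<open>simp add: eL_def eR_def defs ew_def\<close>)
  next
    case LS: (Some c)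
    have c: "c \<in> {1..m}" using assms(1) LS by simp
    show ?thesis
    proof (cases "root_label R")
      case None
      then have R: "R = Leaf" using Rn by simp
      show ?thesis using LS R key c eLr
        by (cases "c = a") (simp_all add: eR_def defs ew_def)
    next
      case RS: (Some b)
      have b: "b \<in> {1..m}" using assms(2) RS by simp
      consider "c < a" | "c = a" | "c > a" by linarith
      then show ?thesis
      proof cases
        case 1
        then show ?thesis using LS RS key b c eLr eRr
          by (cases "b = a") (simp_all add: defs)
      next
        case 2
        then show ?thesis using LS RS key b c eLr eRr
          by (cases "b < a") (simp_all add: defs)
      next
        case 3
        then show ?thesis using LS RS key b c eLr eRr
          by (cases "b = a") (simp_all add: defs)
      qed
    qed
  qed
qed

lemma p0_split:
  assumes "\<And>c. root_label L = Some c \<Longrightarrow> c \<in> {1..m}"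
  shows "p0 L = (if L = Leaf then 1 else 0) + lambdabar * plt L + lambda * pgt L"
  using assms by (cases L) (auto simp: ew_def eL_def p0_def plt_def pgt_def)

lemma q0_split:
  assumes "\<And>c. root_label L = Some c \<Longrightarrow> c \<in> {1..m}"
  shows "q0 L = (if L = Leaf then 1 else 0) + rhobar * pgt L + rho * plt L"
  using assms by (cases L) (auto simp: ew_def eR_def q0_def plt_def pgt_def)

lemma roots_alph: "alph m A \<Longrightarrow> L \<in> Tr A \<Longrightarrow> root_label L = Some c \<Longrightarrow> c \<in> {1..m}"
  by (auto simp: alph_def Tr_def dest!: root_in_labels)

lemma cf_lo: "alph m A \<Longrightarrow> cf (lo m a) A = (\<Sum>L\<in>Tr A. plt L)"
  by (simp add: lo_def cf_sum sum_roots plt_def)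
lemma cf_hi: "alph m A \<Longrightarrow> cf (hi m a) A = (\<Sum>L\<in>Tr A. pgt L)"
  by (simp add: hi_def cf_sum sum_roots pgt_def)
lemma cf_g: "alph m A \<Longrightarrow> cf (Gr m a) A = (\<Sum>L\<in>Tr A. pe L)"
  by (simp add: cf_Gr pe_def)

lemma sum_Leaf: "(\<Sum>L\<in>Tr A. if L = Leaf then (1::coeff) else 0) = (if A = {#} then 1 else 0)"
  by (simp add: sum.delta' finite_Tr Tr_Leaf)

lemma cf_U: "alph m A \<Longrightarrow> cf (1 + LBc * lo m a + Lc * hi m a) A = (\<Sum>L\<in>Tr A. p0 L)"
proof -
  assume A: "alph m A"
  have "(\<Sum>L\<in>Tr A. p0 L) = (\<Sum>L\<in>Tr A. (if L = Leaf then 1 else 0) + lambdabar * plt L + lambda * pgt L)"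
    using p0_split roots_alph[OF A] by (intro sum.cong) auto
  also have "\<dots> = cf (1 + LBc * lo m a + Lc * hi m a) A"
    using A by (simp add: sum.distrib sum_distrib_left cf_cst_times cf_lo cf_hi cf_one sum_Leaf)
  finally show ?thesis by simp
qed

lemma cf_V: "alph m A \<Longrightarrow> cf (1 + RBc * hi m a + Rc * lo m a) A = (\<Sum>L\<in>Tr A. q0 L)"
proof -
  assume A: "alph m A"
  have "(\<Sum>L\<in>Tr A. q0 L) = (\<Sum>L\<in>Tr A. (if L = Leaf then 1 else 0) + rhobar * pgt L + rho * plt L)"
    using q0_split roots_alph[OF A] by (intro sum.cong) auto
  also have "\<dots> = cf (1 + RBc * hi m a + Rc * lo m a) A"
    using A by (simp add: sum.distrib sum_distrib_left cf_cst_times cf_lo cf_hi cf_one sum_Leaf)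
  finally show ?thesis by simp
qed

end


lemma sum3:
  fixes x y u v w z :: "'b \<Rightarrow> 'a::comm_ring_1"
  shows "(\<Sum>L\<in>I. \<Sum>R\<in>J. x L * y R + c*(u L * v R) + d*(w L * z R))
       = (\<Sum>L\<in>I. x L) * (\<Sum>R\<in>J. y R) + c*((\<Sum>L\<in>I. u L) * (\<Sum>R\<in>J. v R)) + d*((\<Sum>L\<in>I. w L) * (\<Sum>R\<in>J. z R))"
  unfolding sum_product by (simp add: sum.distrib sum_distrib_left mult.assoc)

lemma alph_sub: "alph m N \<Longrightarrow> A \<subseteq># N \<Longrightarrow> alph m A"
  unfolding alph_def by (meson mset_subset_eqD subset_iff)

lemma tree_rec:
  assumes a: "a \<in> {1..m}"
  shows "Gr m a = Mon {#a#} * ((1 + LBc*lo m a + Lc*hi m a) * (1 + RBc*hi m a + Rc*lo m a)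
                 + Gr m a * (LBc*Rc*lo m a + Lc*RBc*hi m a))"
proof -
  define U where "U = 1 + LBc*lo m a + Lc*hi m a"
  define V where "V = 1 + RBc*hi m a + Rc*lo m a"
  define Y where "Y = U * V + Gr m a * (LBc*Rc*lo m a + Lc*RBc*hi m a)"
  have Yeq: "Y = U*V + cst (lambdabar*rho) * (Gr m a * lo m a) + cst (lambda*rhobar) * (hi m a * Gr m a)"
    unfolding Y_def by (simp add: cst_mult algebra_simps)
  have rsY: "rs m Y" unfolding Y_def U_def V_def lo_def hi_def
    by (intro rs_plus rs_times rs_one rs_cst rs_sum rs_Gr)
  have "Gr m a = Mon {#a#} * Y"
  proof (rule ms_eqI)
  fix N
  show "cf (Gr m a) N = cf (Mon {#a#} * Y) N"
  proof (cases "alph m N")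
    case False
    have "\<not> alph m (N - {#a#})"
    proof
      assume "alph m (N - {#a#})"
      moreover have "set_mset N \<subseteq> insert a (set_mset (N - {#a#}))"
        by (auto simp: in_diff_count split: if_splits)
      ultimately have "set_mset N \<subseteq> {1..m}" using a unfolding alph_def by blast
      then show False using False by (simp add: alph_def)
    qed
    then show ?thesis using rsY False by (simp add: rs_def cf_Gr cf_Mon_times)
  next
    case True
    show ?thesis
    proof (cases "a \<in># N")
      case False
      then show ?thesis using True
        by (auto simp: cf_Gr Tr_def cf_Mon_times intro!: sum.neutral dest: root_in_labels)
    next
      case aN: True
      define N' where "N' = N - {#a#}"
      have "cf (Gr m a) N = (\<Sum>T\<in>Tr N. if root_label T = Some a then (if smirnov_tree T then ew T else 0) else 0)"
        using True by (simp add: cf_Gr) (rule sum.cong, auto)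
      also have "\<dots> = (\<Sum>A\<in>{A. A \<subseteq># N'}. \<Sum>L\<in>Tr A. \<Sum>R\<in>Tr (N' - A). if smirnov_tree (Node L a R) then ew (Node L a R) else 0)"
        unfolding N'_def by (rule tree_root_decomp[OF aN])
      also have "\<dots> = (\<Sum>A\<in>{A. A \<subseteq># N'}. \<Sum>L\<in>Tr A. \<Sum>R\<in>Tr (N' - A).
             p0 a L * q0 a R + (lambdabar * rho) * (pe a L * plt a R) + (lambda * rhobar) * (pgt m a L * pe a R))"
      proof (intro sum.cong refl)
        fix A L R assume A: "A \<in> {A. A \<subseteq># N'}" and L: "L \<in> Tr A" and R: "R \<in> Tr (N' - A)"
        have N'N: "N' \<subseteq># N" unfolding N'_def by simp
        have aA: "alph m A" using A True N'N alph_sub by (meson mem_Collect_eq subset_mset.order_trans)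
        have aB: "alph m (N' - A)" using True N'N alph_sub
          by (meson diff_subset_eq_self subset_mset.order_trans)
        show "(if smirnov_tree (Node L a R) then ew (Node L a R) else 0) =
              p0 a L * q0 a R + (lambdabar * rho) * (pe a L * plt a R) + (lambda * rhobar) * (pgt m a L * pe a R)"
          by (rule pointwise) (simp_all only: roots_alph[OF aA L] roots_alph[OF aB R])
      qed
      also have "\<dots> = (\<Sum>A\<in>{A. A \<subseteq># N'}. cf U A * cf V (N' - A)
             + (lambdabar * rho) * (cf (Gr m a) A * cf (lo m a) (N' - A))
             + (lambda * rhobar) * (cf (hi m a) A * cf (Gr m a) (N' - A)))"
      proof (intro sum.cong refl)
        fix A assume A: "A \<in> {A. A \<subseteq># N'}"
        have N'N: "N' \<subseteq># N" unfolding N'_def by simp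
        have aA: "alph m A" using A True N'N alph_sub by (meson mem_Collect_eq subset_mset.order_trans)
        have aB: "alph m (N' - A)" using True N'N alph_sub
          by (meson diff_subset_eq_self subset_mset.order_trans)
        show "(\<Sum>L\<in>Tr A. \<Sum>R\<in>Tr (N' - A).
             p0 a L * q0 a R + (lambdabar * rho) * (pe a L * plt a R) + (lambda * rhobar) * (pgt m a L * pe a R))
            = cf U A * cf V (N' - A)
             + (lambdabar * rho) * (cf (Gr m a) A * cf (lo m a) (N' - A))
             + (lambda * rhobar) * (cf (hi m a) A * cf (Gr m a) (N' - A))"
          unfolding sum3 U_def V_def cf_U[OF aA] cf_V[OF aB] cf_g[OF aA] cf_g[OF aB] cf_lo[OF aB] cf_hi[OF aA]
          ..
      qed
      also have "\<dots> = cf Y N'"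
        unfolding Yeq cf_plus cf_cst_times by (simp add: cf_times sum.distrib sum_distrib_left)
      finally show ?thesis using aN N'_def by (simp add: cf_Mon_times)
    qed
  qed
  qed
  then show ?thesis unfolding Y_def U_def V_def .
qed

lemma set_split0: "{i::nat. Q i} = (if Q 0 then {0} else {}) \<union> Suc ` {j. Q (Suc j)}"
  by (auto simp: image_iff; metis not0_implies_Suc)

lemma card_cons2:
  "card {i. Suc i < length (x#y#r) \<and> P ((x#y#r)!i) ((x#y#r)!Suc i)}
   = (if P x y then 1 else 0) + card {i. Suc i < length (y#r) \<and> P ((y#r)!i) ((y#r)!Suc i)}"
proof -
  let ?S = "{i. Suc i < length (y#r) \<and> P ((y#r)!i) ((y#r)!Suc i)}"
  have fin: "finite ?S" by (rule finite_subset[of _ "{..<length (y#r)}"]) auto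
  have "{i. Suc i < length (x#y#r) \<and> P ((x#y#r)!i) ((x#y#r)!Suc i)} = (if P x y then {0} else {}) \<union> Suc ` ?S"
    by (subst set_split0) simp
  moreover have "card ((if P x y then {0} else {}) \<union> Suc ` ?S) = (if P x y then 1 else 0) + card ?S"
    using fin by (simp add: card_image card_insert_if image_iff)
  ultimately show ?thesis by simp
qed

lemma asc_single: "asc [x] = 0" by (simp add: asc_def)
lemma des_single: "des [x] = 0" by (simp add: des_def)
lemma asc_cons2: "asc (x#y#r) = (if x < y then 1 else 0) + asc (y#r)"
  unfolding asc_def by (rule card_cons2)
lemma des_cons2: "des (x#y#r) = (if x > y then 1 else 0) + des (y#r)"
  unfolding des_def by (rule card_cons2)

definition adj :: "nat list \<Rightarrow> bool" where
  "adj w = (\<forall>i. Suc i < length w \<longrightarrow> w ! i \<noteq> w ! Suc i)"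

lemma adj_single: "adj [x]" by (simp add: adj_def)
lemma adj_cons2: "adj (x#y#r) \<longleftrightarrow> x \<noteq> y \<and> adj (y#r)"
proof -
  have "adj (x#y#r) \<longleftrightarrow> (\<forall>i. Suc i < length (x#y#r) \<longrightarrow> (x#y#r) ! i \<noteq> (x#y#r) ! Suc i)"
    by (simp add: adj_def)
  also have "\<dots> \<longleftrightarrow> x \<noteq> y \<and> (\<forall>j. Suc (Suc j) < length (x#y#r) \<longrightarrow> (x#y#r) ! Suc j \<noteq> (x#y#r) ! Suc (Suc j))"
    by (metis nth_Cons_0 nth_Cons_Suc not0_implies_Suc length_Cons Suc_less_eq zero_less_Suc)
  also have "\<dots> \<longleftrightarrow> x \<noteq> y \<and> adj (y#r)" by (simp add: adj_def)
  finally show ?thesis .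
qed

definition wt :: "coeff ms \<Rightarrow> coeff ms \<Rightarrow> nat list \<Rightarrow> coeff ms" where
  "wt S T w = S ^ asc w * T ^ des w * Mon (mset w)"

lemma wt_single: "wt S T [x] = Mon {#x#}"
  by (simp add: wt_def asc_single des_single)

lemma wt_cons2:
  assumes "x \<noteq> y" shows "wt S T (x#y#r) = (if x < y then S else T) * Mon {#x#} * wt S T (y#r)"
proof -
  have "mset (x#y#r) = {#x#} + mset (y#r)" by simp
  then have M: "Mon (mset (x#y#r)) = Mon {#x#} * Mon (mset (y#r))" by (simp only: Mon_add)
  show ?thesis using assms unfolding wt_def M by (auto simp: asc_cons2 des_cons2 ac_simps)
qed

lemma cf_wt_zero: "\<not> mset w \<subseteq># N \<Longrightarrow> cf (wt S T w) N = 0"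
  unfolding wt_def by (subst mult.commute) (simp add: cf_Mon_times)

lemma finite_words: "finite {w. mset w \<subseteq># N}"
proof (rule finite_subset)
  show "{w. mset w \<subseteq># N} \<subseteq> {w. set w \<subseteq> set_mset N \<and> length w \<le> size N}"
    by (auto dest: mset_subset_eqD size_mset_mono)
  show "finite {w. set w \<subseteq> set_mset N \<and> length w \<le> size N}"
    by (rule finite_lists_length_le) simp
qed

definition goodw :: "nat \<Rightarrow> nat \<Rightarrow> nat list \<Rightarrow> bool" where
  "goodw m a w = (w \<noteq> [] \<and> hd w = a \<and> adj w \<and> set w \<subseteq> {1..m})"

definition Fw :: "nat \<Rightarrow> coeff ms \<Rightarrow> coeff ms \<Rightarrow> nat \<Rightarrow> coeff ms" where
  "Fw m S T a = Abs_ms (\<lambda>N. \<Sum>w\<in>{w. goodw m a w \<and> mset w \<subseteq># N}. cf (wt S T w) N)"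

lemma Fw_ext:
  assumes "finite I" "{w. goodw m a w \<and> mset w \<subseteq># N} \<subseteq> I"
  shows "cf (Fw m S T a) N = (\<Sum>w\<in>I. if goodw m a w then cf (wt S T w) N else 0)"
proof -
  have "cf (Fw m S T a) N = (\<Sum>w\<in>{w. goodw m a w \<and> mset w \<subseteq># N}. cf (wt S T w) N)"
    by (simp add: Fw_def)
  also have "\<dots> = (\<Sum>w\<in>I. if goodw m a w \<and> mset w \<subseteq># N then cf (wt S T w) N else 0)"
    using assms by (simp add: sum.inter_filter[symmetric] Int_absorb1 Collect_conj_eq[symmetric])
      (smt (verit) Collect_cong Int_def mem_Collect_eq subset_iff)
  also have "\<dots> = (\<Sum>w\<in>I. if goodw m a w then cf (wt S T w) N else 0)"
    by (rule sum.cong) (auto simp: cf_wt_zero)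
  finally show ?thesis .
qed


definition Iw :: "nat \<Rightarrow> nat \<Rightarrow> nat list set" where "Iw m k = {w. set w \<subseteq> {1..m} \<and> length w \<le> k}"

lemma finite_Iw: "finite (Iw m k)" unfolding Iw_def by (rule finite_lists_length_le) simp

lemma good_sub_Iw: "size N \<le> k \<Longrightarrow> {w. goodw m a w \<and> mset w \<subseteq># N} \<subseteq> Iw m k"
  by (auto simp: Iw_def goodw_def dest!: size_mset_mono)

definition good' :: "nat \<Rightarrow> nat \<Rightarrow> nat list \<Rightarrow> bool" where
  "good' m a w = (w \<noteq> [] \<and> hd w \<noteq> a \<and> adj w \<and> set w \<subseteq> {1..m})"

lemma good_split:
  assumes a: "a \<in> {1..m}"
  shows "{w \<in> Iw m (Suc k). goodw m a w} = insert [a] ((Cons a) ` {w \<in> Iw m k. good' m a w})"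
proof (intro equalityI subsetI)
  fix w assume w: "w \<in> {w \<in> Iw m (Suc k). goodw m a w}"
  show "w \<in> insert [a] ((Cons a) ` {w \<in> Iw m k. good' m a w})"
  proof (cases w)
    case Nil then show ?thesis using w by (simp add: goodw_def)
  next
    case (Cons x r)
    then have x: "x = a" using w by (simp add: goodw_def)
    show ?thesis
    proof (cases r)
      case Nil then show ?thesis using Cons x by simp
    next
      case (Cons y r')
      have "good' m a r" "r \<in> Iw m k" using w \<open>w = x # r\<close> x Cons
        by (auto simp: goodw_def good'_def Iw_def adj_cons2)
      then show ?thesis using \<open>w = x # r\<close> x by blast
    qed
  qed
next
  fix w assume "w \<in> insert [a] ((Cons a) ` {w \<in> Iw m k. good' m a w})"
  then show "w \<in> {w \<in> Iw m (Suc k). goodw m a w}"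
  proof
    assume "w = [a]" then show ?thesis using a by (simp add: Iw_def goodw_def adj_single)
  next
    assume "w \<in> (Cons a) ` {w \<in> Iw m k. good' m a w}"
    then obtain r where r: "w = a # r" "r \<in> Iw m k" "good' m a r" by auto
    then obtain y r' where "r = y # r'" by (cases r) (auto simp: good'_def)
    then show ?thesis using r a by (auto simp: Iw_def goodw_def good'_def adj_cons2)
  qed
qed

lemma word_rec:
  assumes a: "a \<in> {1..m}"
  shows "Fw m S T a = Mon {#a#} * (1 + S * (\<Sum>b\<in>{a<..m}. Fw m S T b) + T * (\<Sum>b\<in>{1..<a}. Fw m S T b))"
proof (rule ms_eqI)
  fix N :: "nat multiset"
  define K where "K = size N"
  have "cf (Fw m S T a) N = (\<Sum>w\<in>Iw m (Suc K). if goodw m a w then cf (wt S T w) N else 0)"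
    by (rule Fw_ext[OF finite_Iw good_sub_Iw]) (simp add: K_def)
  also have "\<dots> = (\<Sum>w\<in>{w \<in> Iw m (Suc K). goodw m a w}. cf (wt S T w) N)"
    by (simp add: sum.inter_filter finite_Iw)
  also have "\<dots> = cf (wt S T [a]) N + (\<Sum>w\<in>{w \<in> Iw m K. good' m a w}. cf (wt S T (a # w)) N)"
    unfolding good_split[OF a] by (subst sum.insert) (auto simp: finite_Iw sum.reindex good'_def)
  also have "\<dots> = cf (Mon {#a#}) N + (\<Sum>w\<in>Iw m K. if good' m a w then cf (wt S T (a # w)) N else 0)"
    by (simp add: wt_single sum.inter_filter finite_Iw)
  finally have L: "cf (Fw m S T a) N = cf (Mon {#a#}) N + (\<Sum>w\<in>Iw m K. if good' m a w then cf (wt S T (a # w)) N else 0)" .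
  have gen: "cf (C * Fw m S T b) N = (\<Sum>w\<in>Iw m K. if goodw m b w then cf (C * wt S T w) N else 0)" for C b
  proof -
    have "cf (C * Fw m S T b) N = (\<Sum>w\<in>Iw m K. cf (C * (if goodw m b w then wt S T w else 0)) N)"
    proof (rule local_sum[OF finite_Iw])
      fix N' assume "N' \<subseteq># N"
      then have "size N' \<le> K" unfolding K_def by (rule size_mset_mono)
      then show "cf (Fw m S T b) N' = (\<Sum>w\<in>Iw m K. cf (if goodw m b w then wt S T w else 0) N')"
        by (subst Fw_ext[OF finite_Iw good_sub_Iw]) (auto intro: sum.cong)
    qed
    moreover have "\<And>w. cf (C * (if goodw m b w then wt S T w else 0)) N = (if goodw m b w then cf (C * wt S T w) N else 0)"
      by simp
    ultimately show ?thesis by simp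
  qed
  have R: "Mon {#a#} * (1 + S * (\<Sum>b\<in>{a<..m}. Fw m S T b) + T * (\<Sum>b\<in>{1..<a}. Fw m S T b))
      = Mon {#a#} + (\<Sum>b\<in>{a<..m}. (S * Mon {#a#}) * Fw m S T b) + (\<Sum>b\<in>{1..<a}. (T * Mon {#a#}) * Fw m S T b)"
    by (simp add: algebra_simps sum_distrib_left)
  have "cf (Mon {#a#} * (1 + S * (\<Sum>b\<in>{a<..m}. Fw m S T b) + T * (\<Sum>b\<in>{1..<a}. Fw m S T b))) N
      = cf (Mon {#a#}) N + (\<Sum>b\<in>{a<..m}. \<Sum>w\<in>Iw m K. if goodw m b w then cf (S * Mon {#a#} * wt S T w) N else 0)
        + (\<Sum>b\<in>{1..<a}. \<Sum>w\<in>Iw m K. if goodw m b w then cf (T * Mon {#a#} * wt S T w) N else 0)"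
    unfolding R by (simp add: cf_sum gen)
  also have "\<dots> = cf (Mon {#a#}) N + (\<Sum>b\<in>{a<..m}. \<Sum>w\<in>Iw m K. if goodw m b w then cf (wt S T (a # w)) N else 0)
        + (\<Sum>b\<in>{1..<a}. \<Sum>w\<in>Iw m K. if goodw m b w then cf (wt S T (a # w)) N else 0)"
  proof -
    have e: "(if goodw m b w then cf (C * Mon {#a#} * wt S T w) N else 0) = (if goodw m b w then cf (wt S T (a # w)) N else 0)"
      if "C = (if a < b then S else T)" "a \<noteq> b" for b w C
    proof (cases "goodw m b w")
      case True
      then obtain r where w: "w = b # r" by (cases w) (auto simp: goodw_def)
      show ?thesis using True that unfolding w by (simp add: wt_cons2)
    qed simp
    have "(\<Sum>b\<in>{a<..m}. \<Sum>w\<in>Iw m K. if goodw m b w then cf (S * Mon {#a#} * wt S T w) N else 0)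
        = (\<Sum>b\<in>{a<..m}. \<Sum>w\<in>Iw m K. if goodw m b w then cf (wt S T (a # w)) N else 0)"
      by (intro sum.cong refl e) auto
    moreover have "(\<Sum>b\<in>{1..<a}. \<Sum>w\<in>Iw m K. if goodw m b w then cf (T * Mon {#a#} * wt S T w) N else 0)
        = (\<Sum>b\<in>{1..<a}. \<Sum>w\<in>Iw m K. if goodw m b w then cf (wt S T (a # w)) N else 0)"
      by (intro sum.cong refl e) auto
    ultimately show ?thesis by simp
  qed
  also have "\<dots> = cf (Mon {#a#}) N + (\<Sum>w\<in>Iw m K. if good' m a w then cf (wt S T (a # w)) N else 0)"
  proof -
    have "(\<Sum>b\<in>{a<..m}. \<Sum>w\<in>Iw m K. if goodw m b w then cf (wt S T (a # w)) N else 0)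
        + (\<Sum>b\<in>{1..<a}. \<Sum>w\<in>Iw m K. if goodw m b w then cf (wt S T (a # w)) N else 0)
        = (\<Sum>w\<in>Iw m K. (\<Sum>b\<in>{a<..m}. if goodw m b w then cf (wt S T (a # w)) N else 0)
             + (\<Sum>b\<in>{1..<a}. if goodw m b w then cf (wt S T (a # w)) N else 0))"
      by (simp add: sum.swap[of _ "{a<..m}"] sum.distrib) (rule sum.swap)
    also have "\<dots> = (\<Sum>w\<in>Iw m K. if good' m a w then cf (wt S T (a # w)) N else 0)"
    proof (rule sum.cong[OF refl])
      fix w
      show "(\<Sum>b\<in>{a<..m}. if goodw m b w then cf (wt S T (a # w)) N else 0)
             + (\<Sum>b\<in>{1..<a}. if goodw m b w then cf (wt S T (a # w)) N else 0)
           = (if good' m a w then cf (wt S T (a # w)) N else 0)"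
      proof (cases "w \<noteq> [] \<and> adj w \<and> set w \<subseteq> {1..m}")
        case True
        then have h: "hd w \<in> {1..m}" by (metis hd_in_set subsetD)
        have gb: "goodw m b w \<longleftrightarrow> b = hd w" for b using True by (auto simp: goodw_def)
        show ?thesis using True h a by (simp add: gb sum.delta good'_def)
      next
        case False
        then have "\<And>b. \<not> goodw m b w" "\<not> good' m a w" by (auto simp: goodw_def good'_def)
        then show ?thesis by simp
      qed
    qed
    finally show ?thesis by (simp add: add.assoc)
  qed
  finally show "cf (Fw m S T a) N = cf (Mon {#a#} * (1 + S * (\<Sum>b\<in>{a<..m}. Fw m S T b) + T * (\<Sum>b\<in>{1..<a}. Fw m S T b))) N"
    using L by simp
qed

lemma mps_pow_cf: "mps_pow f n = cf (Abs_ms f ^ n)"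
  by (induction n) (simp_all add: one_ms_def times_ms_def)

lemma term_cf: "mps_mult (mps_mult (mps_pow s a) (mps_pow t d)) (mps_monom B)
   = cf (Abs_ms s ^ a * Abs_ms t ^ d * Mon B)"
  by (simp add: mps_pow_cf times_ms_def Mon_def)

lemma cf_Mon_right: "cf (f * Mon B) M = (if B \<subseteq># M then cf f (M - B) else 0)"
  by (subst mult.commute) (rule cf_Mon_times)

lemma coeff_ne: "rhobar + lambdabar - rho - lambda \<noteq> (0::coeff)"
proof
  assume "rhobar + lambdabar - rho - lambda = (0::coeff)"
  then have "coeff (rhobar + lambdabar - rho - lambda) 1 = coeff (0::coeff) 1" by simp
  then show False by (simp add: rhobar_def rho_def lambdabar_def lambda_def coeff_monom)
qed

definition Gt :: "nat \<Rightarrow> coeff ms" where "Gt m = (\<Sum>b\<in>{1..m}. Gr m b)"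

lemma G_eq:
  assumes "\<forall>x\<in>#N. x \<le> m"
  shows "mps_sum smirnov_trees (tree_weight rhobar rho lambdabar lambda) N = cf (Gt m) N"
proof -
  have "mps_sum smirnov_trees (tree_weight rhobar rho lambdabar lambda) N
      = (\<Sum>T\<in>{T \<in> smirnov_trees. tree_weight rhobar rho lambdabar lambda T N \<noteq> 0}. tree_weight rhobar rho lambdabar lambda T N)"
    by (simp add: mps_sum_def)
  also have "\<dots> = (\<Sum>T\<in>Tr N. if T \<in> smirnov_trees then ew T else 0)"
  proof -
    have "(\<Sum>T\<in>{T \<in> smirnov_trees. tree_weight rhobar rho lambdabar lambda T N \<noteq> 0}. tree_weight rhobar rho lambdabar lambda T N)
        = (\<Sum>T\<in>Tr N \<inter> smirnov_trees. tree_weight rhobar rho lambdabar lambda T N)"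
      by (rule sum.mono_neutral_left) (auto simp: finite_Tr tree_weight_def Tr_def intro: finite_Int finite_Tr[unfolded Tr_def])
    also have "\<dots> = (\<Sum>T\<in>Tr N \<inter> smirnov_trees. ew T)"
      by (rule sum.cong) (auto simp: tree_weight_def Tr_def ew_def)
    also have "\<dots> = (\<Sum>T\<in>Tr N. if T \<in> smirnov_trees then ew T else 0)"
      by (simp add: sum.inter_restrict finite_Tr)
    finally show ?thesis .
  qed
  also have "\<dots> = cf (Gt m) N"
  proof (cases "alph m N")
    case True
    have "cf (Gt m) N = (\<Sum>T\<in>Tr N. if smirnov_tree T \<and> (\<exists>b\<in>{1..m}. root_label T = Some b) then ew T else 0)"
      unfolding Gt_def cf_sum by (rule sum_roots[OF True]) simp
    also have "\<dots> = (\<Sum>T\<in>Tr N. if T \<in> smirnov_trees then ew T else 0)"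
    proof (rule sum.cong[OF refl])
      fix T assume T: "T \<in> Tr N"
      have "T \<in> smirnov_trees \<longleftrightarrow> smirnov_tree T \<and> (\<exists>b\<in>{1..m}. root_label T = Some b)"
      proof (cases T)
        case Leaf then show ?thesis by (simp add: smirnov_trees_def)
      next
        case (Node L c R)
        then have "c \<in># N" using T by (auto simp: Tr_def)
        then have "c \<in> {1..m}" using True by (auto simp: alph_def)
        moreover have "0 \<notin># tree_labels T" using T True by (auto simp: Tr_def alph_def)
        ultimately show ?thesis using Node by (simp add: smirnov_trees_def)
      qed
      then show "(if smirnov_tree T \<and> (\<exists>b\<in>{1..m}. root_label T = Some b) then ew T else 0)
           = (if T \<in> smirnov_trees then ew T else 0)" by simp
    qed
    finally show ?thesis by simp
  next
    case False
    then have "0 \<in># N" using assms by (auto simp: alph_def) (metis Suc_le_eq not_gr_zero)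
    then have "\<And>T. T \<in> Tr N \<Longrightarrow> T \<notin> smirnov_trees" by (auto simp: Tr_def smirnov_trees_def)
    moreover have "cf (Gt m) N = 0" using False by (simp add: Gt_def cf_sum cf_Gr)
    ultimately show ?thesis by simp
  qed
  finally show ?thesis .
qed


theorem mainTheorem2:
  fixes G s t :: "coeff mps"
  defines "G \<equiv> mps_sum smirnov_trees (tree_weight rhobar rho lambdabar lambda)"
    and "s \<equiv> mps_add (mps_smult (rhobar * lambdabar) G) (mps_const (rhobar + lambdabar))"
    and "t \<equiv> mps_add (mps_smult (rho * lambda) G) (mps_const (rho + lambda))"
  shows "mps_summable smirnov_trees (tree_weight rhobar rho lambdabar lambda)
    \<and> mps_summable smirnov_words
        (\<lambda>w. mps_mult (mps_mult (mps_pow s (asc w)) (mps_pow t (des w))) (mps_monom (mset w)))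
    \<and> G = mps_sum smirnov_words
        (\<lambda>w. mps_mult (mps_mult (mps_pow s (asc w)) (mps_pow t (des w))) (mps_monom (mset w)))"
proof -
  define tm where "tm w = mps_mult (mps_mult (mps_pow s (asc w)) (mps_pow t (des w))) (mps_monom (mset w))" for w
  have tm_cf: "tm w = cf (Abs_ms s ^ asc w * Abs_ms t ^ des w * Mon (mset w))" for w
    unfolding tm_def by (rule term_cf)
  have tm_zero: "tm w M \<noteq> 0 \<Longrightarrow> mset w \<subseteq># M" for w M
    unfolding tm_cf cf_Mon_right by (auto split: if_splits)
  have S1: "mps_summable smirnov_trees (tree_weight rhobar rho lambdabar lambda)"
    unfolding mps_summable_def
  proof
    fix M
    show "finite {T \<in> smirnov_trees. tree_weight rhobar rho lambdabar lambda T M \<noteq> 0}"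
      by (rule finite_subset[OF _ finite_Tr[of M]]) (auto simp: Tr_def tree_weight_def split: if_splits)
  qed
  have S2: "mps_summable smirnov_words tm"
    unfolding mps_summable_def
  proof
    fix M
    show "finite {w \<in> smirnov_words. tm w M \<noteq> 0}"
      by (rule finite_subset[OF _ finite_words[of M]]) (auto dest: tm_zero)
  qed
  have EQ: "G M = mps_sum smirnov_words tm M" for M
  proof -
    define m where "m = Max (insert 0 (set_mset M))"
    have mM: "\<forall>x\<in>#M. x \<le> m" unfolding m_def by simp
    define Sr where "Sr = RBc + LBc + RBc*LBc*Gt m"
    define Tr' where "Tr' = Rc + Lc + Rc*Lc*Gt m"
    define PT where "PT = (\<Prod>a\<in>{1..m}. 1 + Tr' * Mon {#a#})"
    define PS where "PS = (\<Prod>a\<in>{1..m}. 1 + Sr * Mon {#a#})"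
    define Ft where "Ft = (\<Sum>b\<in>{1..m}. Fw m Sr Tr' b)"
    have t1: "(1 + Sr * Gt m) * PT = (1 + Tr' * Gt m) * PS"
      unfolding Sr_def Tr'_def PT_def PS_def Gt_def
      by (rule tree_telescope, erule tree_rec[unfolded lo_def hi_def], rule cf_Gr_empty)
    have t2: "(1 + Sr * Ft) * PT = (1 + Tr' * Ft) * PS"
      unfolding PT_def PS_def Ft_def
      by (rule word_telescope) (rule word_rec)
    have cfGt: "cf (Gt m) {#} = 0" by (simp add: Gt_def cf_sum cf_Gr_empty)
    have cfP: "cf PT {#} = 1" "cf PS {#} = 1"
      unfolding PT_def PS_def cf_prod_empty by (simp_all add: cf_times_empty cf_Mon cf_one)
    have "cf (Sr * PT - Tr' * PS) {#} = rhobar + lambdabar - rho - lambda"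
      by (simp add: cf_times_empty cfP Sr_def Tr'_def cf_cst cfGt)
    then have "cf (Sr * PT - Tr' * PS) {#} \<noteq> 0" using coeff_ne by simp
    then have GF: "Gt m = Ft" using uniqueness t1 t2 by blast
    have agreeN: "N \<subseteq># M \<Longrightarrow> \<forall>x\<in>#N. x \<le> m" for N using mM by (meson mset_subset_eqD)
    have aS: "agree M (Abs_ms s) Sr"
      unfolding agree_def
    proof (intro allI impI)
      fix N assume N: "N \<subseteq># M"
      have "RBc * LBc * Gt m = cst (rhobar * lambdabar) * Gt m" by (simp add: cst_mult)
      then show "cf (Abs_ms s) N = cf Sr N"
        unfolding Sr_def using G_eq[OF agreeN[OF N]]
        by (simp add: s_def mps_add_def mps_smult_def mps_const_def cf_cst cf_cst_times G_def)
    qed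
    have aT: "agree M (Abs_ms t) Tr'"
      unfolding agree_def
    proof (intro allI impI)
      fix N assume N: "N \<subseteq># M"
      have "Rc * Lc * Gt m = cst (rho * lambda) * Gt m" by (simp add: cst_mult)
      then show "cf (Abs_ms t) N = cf Tr' N"
        unfolding Tr'_def using G_eq[OF agreeN[OF N]]
        by (simp add: t_def mps_add_def mps_smult_def mps_const_def cf_cst cf_cst_times G_def)
    qed
    define W where "W = {w \<in> smirnov_words. mset w \<subseteq># M}"
    have finW: "finite W" unfolding W_def by (rule finite_subset[OF _ finite_words[of M]]) auto
    have "mps_sum smirnov_words tm M = (\<Sum>w\<in>{w \<in> smirnov_words. tm w M \<noteq> 0}. tm w M)"
      by (simp add: mps_sum_def)
    also have "\<dots> = (\<Sum>w\<in>W. tm w M)"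
      by (rule sum.mono_neutral_left[OF finW]) (auto simp: W_def dest: tm_zero)
    also have "\<dots> = (\<Sum>w\<in>W. cf (wt Sr Tr' w) M)"
    proof (rule sum.cong[OF refl])
      fix w
      have "agree M (Abs_ms s ^ asc w * Abs_ms t ^ des w * Mon (mset w)) (Sr ^ asc w * Tr' ^ des w * Mon (mset w))"
        by (intro agree_times agree_power aS aT agree_refl)
      then show "tm w M = cf (wt Sr Tr' w) M" unfolding tm_cf wt_def agree_def by simp
    qed
    also have "\<dots> = cf Ft M"
    proof -
      have "cf Ft M = (\<Sum>a\<in>{1..m}. \<Sum>w\<in>W. if goodw m a w then cf (wt Sr Tr' w) M else 0)"
        unfolding Ft_def cf_sum
      proof (rule sum.cong[OF refl], rule Fw_ext[OF finW])
        fix a show "{w. goodw m a w \<and> mset w \<subseteq># M} \<subseteq> W"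
          by (auto simp: W_def goodw_def smirnov_words_def smirnov_word_def adj_def)
      qed
      also have "\<dots> = (\<Sum>w\<in>W. \<Sum>a\<in>{1..m}. if goodw m a w then cf (wt Sr Tr' w) M else 0)"
        by (rule sum.swap)
      also have "\<dots> = (\<Sum>w\<in>W. cf (wt Sr Tr' w) M)"
      proof (rule sum.cong[OF refl])
        fix w assume w: "w \<in> W"
        then have w1: "w \<noteq> []" "adj w" "0 \<notin> set w" "mset w \<subseteq># M"
          by (auto simp: W_def smirnov_words_def smirnov_word_def adj_def)
        have "set w \<subseteq> {1..m}"
        proof
          fix x assume x: "x \<in> set w"
          then have "x \<in># M" using w1(4) by (meson in_multiset_in_set mset_subset_eqD)
          then show "x \<in> {1..m}" using mM x w1(3) by (auto simp: Suc_le_eq intro: gr0I)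
        qed
        then have g: "goodw m a w \<longleftrightarrow> a = hd w" for a using w1 by (auto simp: goodw_def)
        have "hd w \<in> {1..m}" using \<open>set w \<subseteq> {1..m}\<close> w1(1) hd_in_set by blast
        then show "(\<Sum>a\<in>{1..m}. if goodw m a w then cf (wt Sr Tr' w) M else 0) = cf (wt Sr Tr' w) M"
          by (simp add: g sum.delta')
      qed
      finally show ?thesis by simp
    qed
    also have "\<dots> = cf (Gt m) M" using GF by simp
    also have "\<dots> = G M" unfolding G_def using G_eq[OF mM] by simp
    finally show ?thesis by simp
  qed
  show ?thesis using S1 S2 EQ unfolding tm_def by auto
qed

end
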